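(* Let $\lambda \geq 0$, $0 \leq \gamma \leq 1$, $0\leq\beta<1$ and $\tau \in \mathbb{C}\setminus\{0\}$. Let $f(z)=z+\sum_{k=2}^{\infty}a_kz^k$ belong to $\Theta_{\Sigma}(\tau,\lambda,\gamma,0;\beta)$ (the case $\delta=0$). Then $$|a_2| \leq \min\left\{\frac{2|\tau|(1-\beta)}{1+\lambda+\gamma+5\lambda\gamma},\ \sqrt{\frac{2|\tau|(1-\beta)}{1+2(\lambda+\gamma+5\lambda\gamma)}}\right\}\quad\text{and}\quad |a_3| \leq \frac{2|\tau|(1-\beta)}{1+2(\lambda+\gamma+5\lambda\gamma)}.$$
   Context: Let $\mathbb{U}=\{z\in\mathbb{C}:|z|<1\}$. $\Sigma$ denotes the class of bi-univalent functions: functions $f(z)=z+\sum_{k=2}^\infty a_kz^k$ analytic and univalent in $\mathbb{U}$ whose inverse $f^{-1}$ extends to a univalent function $g$ on $\mathbb{U}$; this $g$ has the expansion $g(w)=w-a_2w^2+(2a_2^2-a_3)w^3-\cdots$. For $\delta\in\mathbb{N}_0$ and $h(z)=z+\sum_{k\ge2}c_kz^k$ analytic in $\mathbb{U}$, the Ruscheweyh derivative is $\mathcal{R}^\delta h(z)=z+\sum_{k=2}^{\infty}\frac{\Gamma(\delta+k)}{\Gamma(k)\Gamma(\delta+1)}c_kz^k$ (for $\delta=0$ it is the identity). For such $h$ and parameters $\lambda,\gamma,\tau\neq0,\delta$, put $$J_h(z)=1+\frac{1}{\tau}\Big[(1-\lambda)(1-\gamma)\frac{\mathcal{R}^\delta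 h(z)}{z}+(\lambda(\gamma+1)+\gamma)(\mathcal{R}^\delta h)'(z)+\lambda\gamma\big(z(\mathcal{R}^\delta h)''(z)-2\big)-1\Big].$$ For $0\le\beta<1$, $\Theta_{\Sigma}(\tau,\lambda,\gamma,\delta;\beta)$ is the set of $f\in\Sigma$ such that $\operatorname{Re}J_f(z)>\beta$ for all $z\in\mathbb{U}$ and $\operatorname{Re}J_g(w)>\beta$ for all $w\in\mathbb{U}$, where $g$ is the extension of $f^{-1}$ to $\mathbb{U}$. *)

theory Defs
  imports "HOL-Complex_Analysis.Complex_Analysis"
begin

definition tcoeff :: "(complex \<Rightarrow> complex) \<Rightarrow> nat \<Rightarrow> complex" where
  "tcoeff h k = (deriv ^^ k) h 0 / of_nat (fact k)"

text \<open>Ruscheweyh derivative: R^d h(z) = z + sum_{k>=2} Gamma(d+k)/(Gamma(k) Gamma(d+1)) c_k z^k;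
  Gamma(d+k)/(Gamma(k)Gamma(d+1)) = (d+k-1 choose d).\<close>
definition ruscheweyh :: "nat \<Rightarrow> (complex \<Rightarrow> complex) \<Rightarrow> complex \<Rightarrow> complex" where
  "ruscheweyh d h z = z + (\<Sum>k. (if k \<ge> 2 then of_nat ((d + k - 1) choose d) * tcoeff h k * z ^ k else 0))"

definition rquot :: "nat \<Rightarrow> (complex \<Rightarrow> complex) \<Rightarrow> complex \<Rightarrow> complex" where
  "rquot d h z = (if z = 0 then deriv (ruscheweyh d h) 0 else ruscheweyh d h z / z)"

definition Jfun :: "complex \<Rightarrow> real \<Rightarrow> real \<Rightarrow> nat \<Rightarrow> (complex \<Rightarrow> complex) \<Rightarrow> complex \<Rightarrow> complex" where
  "Jfun tau lam gam d h z = 1 + (1 / tau) *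
     (of_real ((1 - lam) * (1 - gam)) * rquot d h z
      + of_real (lam * (gam + 1) + gam) * deriv (ruscheweyh d h) z
      + of_real (lam * gam) * (z * deriv (deriv (ruscheweyh d h)) z - 2) - 1)"

text \<open>f is in the class Sigma with g the univalent extension of f^{-1} to the unit disc:
  f normalized, analytic and univalent on U; g analytic and univalent on U and g is
  the inverse of f near 0 (hence g extends f^{-1}).\<close>
definition bi_univalent_pair :: "(complex \<Rightarrow> complex) \<Rightarrow> (complex \<Rightarrow> complex) \<Rightarrow> bool" where
  "bi_univalent_pair f g \<longleftrightarrow>
     f holomorphic_on ball 0 1 \<and> inj_on f (ball 0 1) \<and> f 0 = 0 \<and> deriv f 0 = 1 \<and>
     g holomorphic_on ball 0 1 \<and> inj_on g (ball 0 1) \<and>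
     (\<exists>e>0. \<forall>w\<in>ball 0 e. w \<in> f ` ball 0 1 \<and> g w \<in> ball 0 1 \<and> f (g w) = w)"

definition Theta_Sigma :: "complex \<Rightarrow> real \<Rightarrow> real \<Rightarrow> nat \<Rightarrow> real \<Rightarrow> (complex \<Rightarrow> complex) set" where
  "Theta_Sigma tau lam gam d beta = {f. \<exists>g. bi_univalent_pair f g \<and>
      (\<forall>z\<in>ball 0 1. Re (Jfun tau lam gam d f z) > beta) \<and>
      (\<forall>w\<in>ball 0 1. Re (Jfun tau lam gam d g w) > beta)}"

end

theory Submission
  imports Defs
begin

lemma bound_deriv:
  assumes hol: "w holomorphic_on ball 0 1" and bd: "\<forall>z\<in>ball 0 1. cmod (w z) \<le> 1"
  shows "cmod ((deriv^^n) w 0) \<le> fact n"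
proof -
  let ?x = "cmod ((deriv^^n) w 0)"
  have le: "?x * r^n \<le> fact n" if r: "0 < r" "r < 1" for r :: real
  proof -
    have "?x \<le> fact n * 1 / r^n"
    proof (rule Cauchy_inequality)
      show "w holomorphic_on ball 0 r" using hol r by (auto intro: holomorphic_on_subset)
      show "continuous_on (cball 0 r) w"
        using hol r by (intro holomorphic_on_imp_continuous_on holomorphic_on_subset[OF hol]) auto
      show "0 < r" by fact
      show "cmod (w x) \<le> 1" if "cmod (0 - x) = r" for x
        using bd that r by auto
    qed
    then show ?thesis using r by (simp add: field_simps)
  qed
  have "((\<lambda>r. ?x * r^n) \<longlongrightarrow> ?x * 1^n) (at_left (1::real))"
    by (intro tendsto_intros)
  moreover have "eventually (\<lambda>r. ?x * r^n \<le> fact n) (at_left (1::real))"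
    using eventually_at_left_real[of 0 "1::real"] by (rule eventually_mono) (auto intro: le)
  ultimately have "?x * 1^n \<le> fact n"
    by (rule tendsto_le[OF trivial_limit_at_left_real tendsto_const])
  then show ?thesis by simp
qed

lemma zero_deriv_const:
  fixes F :: "complex \<Rightarrow> complex"
  assumes "open S" "w \<in> S" "(F has_field_derivative D) (at w)" "\<And>x. x \<in> S \<Longrightarrow> F x = c"
  shows "D = 0"
proof -
  have "((\<lambda>x. c) has_field_derivative D) (at w)"
    by (rule has_field_derivative_transform_within_open[OF assms(3,1,2)]) (rule assms(4))
  from DERIV_unique[OF this DERIV_const] show ?thesis .
qed

lemma ev_ball:
  assumes "z \<in> ball 0 1" "\<And>x. x \<in> ball 0 1 \<Longrightarrow> P x" shows "eventually P (nhds (z::complex))"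
proof -
  have "eventually (\<lambda>y. y \<in> ball 0 1) (nhds z)" by (rule eventually_nhds_in_open) (use assms in auto)
  then show ?thesis by (rule eventually_mono) (rule assms(2))
qed

lemma mob:
  assumes hol: "u holomorphic_on ball 0 1" and re: "\<forall>z\<in>ball 0 1. Re (u z) > -1"
  obtains w where "w holomorphic_on ball 0 1" "\<forall>z\<in>ball 0 1. cmod (w z) \<le> 1"
    "\<And>z. z \<in> ball 0 1 \<Longrightarrow> u z = 2 * w z + w z * u z"
proof -
  define w where "w = (\<lambda>z. u z / (2 + u z))"
  have nz: "2 + u z \<noteq> 0" if "z \<in> ball 0 1" for z
  proof -
    have "Re (u z) > -1" using re that by auto
    then have "Re (2 + u z) > 0" by simp
    then show ?thesis by (metis zero_complex.sel(1) less_irrefl)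
  qed
  have holw: "w holomorphic_on ball 0 1" unfolding w_def using hol nz by (auto intro!: holomorphic_intros)
  have bd: "\<forall>z\<in>ball 0 1. cmod (w z) \<le> 1"
  proof
    fix z :: complex assume z: "z \<in> ball 0 1"
    have r: "Re (u z) > -1" using re z by auto
    have "(cmod (u z))^2 \<le> (cmod (2 + u z))^2"
    proof -
      have "(Re (u z))^2 \<le> (2 + Re (u z))^2" using r by (simp add: power2_eq_square algebra_simps)
      then show ?thesis unfolding cmod_power2 by simp
    qed
    then have "cmod (u z) \<le> cmod (2 + u z)"
      using power2_le_imp_le norm_ge_zero by blast
    then show "cmod (w z) \<le> 1" using nz[OF z] by (simp add: w_def norm_divide divide_le_eq_1)
  qed
  have eq: "u z = 2 * w z + w z * u z" if "z \<in> ball 0 1" for z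
  proof -
    have "2 * w z + w z * u z = w z * (2 + u z)" by (simp add: algebra_simps)
    also have "\<dots> = u z" using nz[OF that] by (simp add: w_def)
    finally show ?thesis by simp
  qed
  show ?thesis by (rule that[OF holw bd eq])
qed

lemma mob_deriv:
  assumes hol: "u holomorphic_on ball 0 1" and w: "w holomorphic_on ball 0 1"
    and eq: "\<And>z. z \<in> ball 0 1 \<Longrightarrow> u z = 2 * w z + w z * u z"
  shows "(deriv ^^ n) u 0 = 2 * (deriv ^^ n) w 0 + (\<Sum>i = 0..n. of_nat (n choose i) * (deriv ^^ i) w 0 * (deriv ^^ (n-i)) u 0)"
proof -
  have ev: "eventually (\<lambda>z. u z = 2 * w z + w z * u z) (nhds 0)"
    by (rule ev_ball) (simp, erule eq)
  have "(deriv ^^ n) u 0 = (deriv ^^ n) (\<lambda>z. 2 * w z + w z * u z) 0"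
    by (rule higher_deriv_cong_ev[OF ev refl])
  also have "\<dots> = (deriv ^^ n) (\<lambda>z. 2 * w z) 0 + (deriv ^^ n) (\<lambda>z. w z * u z) 0"
    by (rule higher_deriv_add[where S="ball 0 1"]) (use w hol in \<open>auto intro!: holomorphic_intros\<close>)
  also have "(deriv ^^ n) (\<lambda>z. 2 * w z) 0 = 2 * (deriv ^^ n) w 0"
    by (rule higher_deriv_cmult[where A="ball 0 1"]) (use w in auto)
  also have "(deriv ^^ n) (\<lambda>z. w z * u z) 0 = (\<Sum>i = 0..n. of_nat (n choose i) * (deriv ^^ i) w 0 * (deriv ^^ (n-i)) u 0)"
    by (rule higher_deriv_mult[where S="ball 0 1"]) (use w hol in auto)
  finally show ?thesis .
qed

lemma cara1:
  assumes hol: "u holomorphic_on ball 0 1" and u0: "u 0 = 0" and re: "\<forall>z\<in>ball 0 1. Re (u z) > -1"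
  shows "cmod (deriv u 0) \<le> 2"
proof -
  obtain w where holw: "w holomorphic_on ball 0 1" and bd: "\<forall>z\<in>ball 0 1. cmod (w z) \<le> 1"
    and eq: "\<And>z. z \<in> ball 0 1 \<Longrightarrow> u z = 2 * w z + w z * u z"
    using mob[OF hol re] by blast
  have w0: "w 0 = 0" using eq[of 0] u0 by simp
  have "(deriv ^^ 1) u 0 = 2 * (deriv ^^ 1) w 0 + (\<Sum>i = 0..1. of_nat (1 choose i) * (deriv ^^ i) w 0 * (deriv ^^ (1-i)) u 0)"
    by (rule mob_deriv[OF hol holw eq])
  also have "\<dots> = 2 * deriv w 0" using u0 w0 by simp
  finally have e: "deriv u 0 = 2 * deriv w 0" by simp
  have "cmod ((deriv ^^ 1) w 0) \<le> fact 1" by (rule bound_deriv[OF holw bd])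
  then have b: "cmod (deriv w 0) \<le> 1" by simp
  have "cmod (deriv u 0) = 2 * cmod (deriv w 0)" unfolding e by (simp add: norm_mult)
  with b show ?thesis by linarith
qed

lemma cara2:
  assumes hol: "u holomorphic_on ball 0 1" and u0: "u 0 = 0" and re: "\<forall>z\<in>ball 0 1. Re (u z) > -1"
  shows "cmod ((deriv ^^ 2) u 0) \<le> 4"
proof -
  define v where "v = (\<lambda>z. (1/2) * (u z + u ((-1) * z)))"
  have hol2: "(\<lambda>z. u ((-1) * z)) holomorphic_on ball 0 1"
  proof -
    have "(u \<circ> (\<lambda>z. (-1) * z)) holomorphic_on ball 0 1"
      by (rule holomorphic_on_compose_gen[OF _ hol]) (auto intro!: holomorphic_intros)
    then show ?thesis by (simp add: o_def)
  qed
  have holv: "v holomorphic_on ball 0 1" unfolding v_def using hol hol2 by (auto intro!: holomorphic_intros)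
  have v0: "v 0 = 0" using u0 by (simp add: v_def)
  have rev: "\<forall>z\<in>ball 0 1. Re (v z) > -1"
  proof
    fix z :: complex assume z: "z \<in> ball 0 1"
    then have "(-1) * z \<in> ball 0 1" by auto
    then have "Re (u z) > -1" "Re (u ((-1) * z)) > -1" using re z by auto
    then show "Re (v z) > -1" by (simp add: v_def)
  qed
  have dv: "(deriv ^^ n) v 0 = (1/2) * ((deriv ^^ n) u 0 + (-1)^n * (deriv ^^ n) u 0)" for n
  proof -
    have "(deriv ^^ n) v 0 = (1/2) * (deriv ^^ n) (\<lambda>z. u z + u ((-1) * z)) 0"
      unfolding v_def by (rule higher_deriv_cmult[where A="ball 0 1"]) (use hol hol2 in \<open>auto intro!: holomorphic_intros\<close>)
    also have "(deriv ^^ n) (\<lambda>z. u z + u ((-1) * z)) 0 = (deriv ^^ n) u 0 + (deriv ^^ n) (\<lambda>z. u ((-1) * z)) 0"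
      by (rule higher_deriv_add[where S="ball 0 1"]) (use hol hol2 in auto)
    also have "(deriv ^^ n) (\<lambda>z. u ((-1) * z)) 0 = (-1)^n * (deriv ^^ n) u ((-1) * 0)"
      by (rule higher_deriv_compose_linear[where S="ball 0 1" and T="ball 0 1"]) (use hol in auto)
    finally show ?thesis by simp
  qed
  obtain w where holw: "w holomorphic_on ball 0 1" and bd: "\<forall>z\<in>ball 0 1. cmod (w z) \<le> 1"
    and eq: "\<And>z. z \<in> ball 0 1 \<Longrightarrow> v z = 2 * w z + w z * v z"
    using mob[OF holv rev] by blast
  have w0: "w 0 = 0" using eq[of 0] v0 by simp
  have dv1: "(deriv ^^ 1) v 0 = 0" using dv[of 1] by simp
  have dv2: "(deriv ^^ 2) v 0 = (deriv ^^ 2) u 0" using dv[of 2] by simp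
  have "(deriv ^^ 2) v 0 = 2 * (deriv ^^ 2) w 0 + (\<Sum>i = 0..2. of_nat (2 choose i) * (deriv ^^ i) w 0 * (deriv ^^ (2-i)) v 0)"
    by (rule mob_deriv[OF holv holw eq])
  also have "(\<Sum>i = 0..2. of_nat (2 choose i) * (deriv ^^ i) w 0 * (deriv ^^ (2-i)) v 0) =
      w 0 * (deriv ^^ 2) v 0 + 2 * (deriv ^^ 1) w 0 * (deriv ^^ 1) v 0 + (deriv ^^ 2) w 0 * v 0"
    by (simp add: numeral_2_eq_2)
  also have "\<dots> = 0" using w0 v0 dv1 by simp
  finally have e: "(deriv ^^ 2) u 0 = 2 * (deriv ^^ 2) w 0" using dv2 by simp
  have "cmod ((deriv ^^ 2) w 0) \<le> fact 2" by (rule bound_deriv[OF holw bd])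
  then have b: "cmod ((deriv ^^ 2) w 0) \<le> 2" by simp
  have "cmod ((deriv ^^ 2) u 0) = 2 * cmod ((deriv ^^ 2) w 0)" unfolding e by (simp add: norm_mult)
  with b show ?thesis by linarith
qed

lemma d2: "(deriv ^^ 2) f z = deriv (deriv f) z"
  by (simp add: numeral_2_eq_2)

lemma d3: "(deriv ^^ 3) f z = deriv (deriv (deriv f)) z"
  by (simp add: numeral_3_eq_3)

lemma rusch:
  assumes hol: "h holomorphic_on ball 0 1" and h0: "h 0 = 0" and h1: "deriv h 0 = 1"
    and z: "z \<in> ball 0 1"
  shows "ruscheweyh 0 h z = h z"
proof -
  define s where "s = (\<lambda>n. (deriv ^^ n) h 0 / fact n * z ^ n)"
  have ss: "s sums h z" unfolding s_def using holomorphic_power_series[OF hol z] by simp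
  have "(\<lambda>n. if n \<in> {0,1} then 0 else s n) sums (h z + (\<Sum>n\<in>{0,1}. 0 - s n))"
    by (rule sums_If_finite_set'[OF ss]) auto
  moreover have "(\<Sum>n\<in>{0::nat,1}. 0 - s n) = - z" using h0 h1 by (simp add: s_def)
  moreover have "(\<lambda>k. (if k \<ge> 2 then of_nat ((0 + k - 1) choose 0) * tcoeff h k * z ^ k else 0)) =
      (\<lambda>n. if n \<in> {0,1} then 0 else s n)"
    by (rule ext) (auto simp: s_def tcoeff_def)
  ultimately have "(\<lambda>k. (if k \<ge> 2 then of_nat ((0 + k - 1) choose 0) * tcoeff h k * z ^ k else 0)) sums (h z - z)"
    by simp
  then show ?thesis unfolding ruscheweyh_def by (simp add: sums_iff)
qed

lemma hd_shift: "(deriv ^^ n) (deriv h) = (deriv ^^ Suc n) h"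
  by (simp add: funpow_swap1)

lemma hdd_shift: "(deriv ^^ n) (deriv (deriv h)) = (deriv ^^ Suc (Suc n)) h"
  by (simp add: funpow_swap1)

lemma fact3c: "(fact 3 :: complex) = 6"
  by (simp add: numeral_3_eq_3)

lemma Jq:
  fixes tau :: complex and lam gam :: real
  assumes hol: "h holomorphic_on ball 0 1" and h0: "h 0 = 0" and h1: "deriv h 0 = 1"
  obtains q where "q holomorphic_on ball 0 1" "q 0 = 0"
    "\<forall>z\<in>ball 0 1. Jfun tau lam gam 0 h z = 1 + q z"
    "deriv q 0 = of_real (1 + lam + gam + 5 * lam * gam) / tau * tcoeff h 2"
    "(deriv ^^ 2) q 0 = 2 * of_real (1 + 2 * (lam + gam + 5 * lam * gam)) / tau * tcoeff h 3"
proof -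
  define c1 :: complex where "c1 = of_real ((1 - lam) * (1 - gam))"
  define c2 :: complex where "c2 = of_real (lam * (gam + 1) + gam)"
  define c3 :: complex where "c3 = of_real (lam * gam)"
  define rq where "rq = (\<lambda>z. if z = 0 then deriv h 0 else (h z - h 0) / (z - 0))"
  define P where "P = (\<lambda>z. c1 * rq z + c2 * deriv h z + c3 * (z * deriv (deriv h) z))"
  define K where "K = - 2 * c3 - 1"
  define q where "q = (\<lambda>z. (1 / tau) * (P z + K))"
  have holrq: "rq holomorphic_on ball 0 1" unfolding rq_def by (rule pole_lemma_open[OF hol]) simp
  have holhd: "deriv h holomorphic_on ball 0 1" using hol by (auto intro: holomorphic_deriv)
  have holhdd: "deriv (deriv h) holomorphic_on ball 0 1" using holhd by (auto intro: holomorphic_deriv)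
  have holzh: "(\<lambda>z. z * deriv (deriv h) z) holomorphic_on ball 0 1"
    using holhdd by (auto intro!: holomorphic_intros)
  have holP: "P holomorphic_on ball 0 1" unfolding P_def
    using holrq holhd holzh by (auto intro!: holomorphic_intros)
  have holq: "q holomorphic_on ball 0 1" unfolding q_def using holP by (auto intro!: holomorphic_intros)
  have rq0: "rq 0 = 1" using h1 by (simp add: rq_def)
  have q0: "q 0 = 0" using rq0 h1 by (simp add: q_def P_def K_def c1_def c2_def c3_def algebra_simps)
  have J: "\<forall>z\<in>ball 0 1. Jfun tau lam gam 0 h z = 1 + q z"
  proof
    fix z :: complex assume z: "z \<in> ball 0 1"
    have evR: "eventually (\<lambda>x. ruscheweyh 0 h x = h x) (nhds y)" if "y \<in> ball 0 1" for y
      by (rule ev_ball[OF that]) (rule rusch[OF hol h0 h1])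
    have dR: "deriv (ruscheweyh 0 h) y = deriv h y" if "y \<in> ball 0 1" for y
      by (rule deriv_cong_ev[OF evR[OF that] refl])
    have ddR: "deriv (deriv (ruscheweyh 0 h)) z = deriv (deriv h) z"
      using higher_deriv_cong_ev[OF evR[OF z] refl, of 2] by (simp add: d2)
    have rqz: "rquot 0 h z = rq z"
    proof (cases "z = 0")
      case True then show ?thesis using dR[of 0] by (simp add: rquot_def rq_def)
    next
      case False then show ?thesis using rusch[OF hol h0 h1 z] h0 by (simp add: rquot_def rq_def)
    qed
    show "Jfun tau lam gam 0 h z = 1 + q z"
      unfolding Jfun_def rqz dR[OF z] ddR
      by (simp add: q_def P_def K_def c1_def c2_def c3_def algebra_simps)
  qed
  have DP: "(deriv ^^ n) P 0 = c1 * (deriv ^^ n) rq 0 + c2 * (deriv ^^ Suc n) h 0 + c3 * (deriv ^^ n) (\<lambda>z. z * deriv (deriv h) z) 0" for n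
  proof -
    have "(deriv ^^ n) P 0 = (deriv ^^ n) (\<lambda>z. c1 * rq z + c2 * deriv h z) 0 + (deriv ^^ n) (\<lambda>z. c3 * (z * deriv (deriv h) z)) 0"
      unfolding P_def by (rule higher_deriv_add[where S="ball 0 1"]) (use holrq holhd holzh in \<open>auto intro!: holomorphic_intros\<close>)
    also have "(deriv ^^ n) (\<lambda>z. c1 * rq z + c2 * deriv h z) 0 = (deriv ^^ n) (\<lambda>z. c1 * rq z) 0 + (deriv ^^ n) (\<lambda>z. c2 * deriv h z) 0"
      by (rule higher_deriv_add[where S="ball 0 1"]) (use holrq holhd in \<open>auto intro!: holomorphic_intros\<close>)
    also have "(deriv ^^ n) (\<lambda>z. c1 * rq z) 0 = c1 * (deriv ^^ n) rq 0"
      by (rule higher_deriv_cmult[where A="ball 0 1"]) (use holrq in auto)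
    also have "(deriv ^^ n) (\<lambda>z. c2 * deriv h z) 0 = c2 * (deriv ^^ n) (deriv h) 0"
      by (rule higher_deriv_cmult[where A="ball 0 1"]) (use holhd in auto)
    also have "(deriv ^^ n) (\<lambda>z. c3 * (z * deriv (deriv h) z)) 0 = c3 * (deriv ^^ n) (\<lambda>z. z * deriv (deriv h) z) 0"
      by (rule higher_deriv_cmult[where A="ball 0 1"]) (use holzh in auto)
    finally show ?thesis by (simp add: hd_shift)
  qed
  have Dzh: "(deriv ^^ n) (\<lambda>z. z * deriv (deriv h) z) 0 =
      (\<Sum>i = 0..n. of_nat (n choose i) * (deriv ^^ i) (\<lambda>w. w) 0 * (deriv ^^ (n-i)) (deriv (deriv h)) 0)" for n
    by (rule higher_deriv_mult[where S="ball 0 1"]) (use holhdd in auto)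
  have hrq: "h z = z * rq z" if "z \<in> ball 0 1" for z
    using h0 by (simp add: rq_def)
  have Dh: "(deriv ^^ n) h 0 = (\<Sum>i = 0..n. of_nat (n choose i) * (deriv ^^ i) (\<lambda>w. w) 0 * (deriv ^^ (n-i)) rq 0)" for n
  proof -
    have "(deriv ^^ n) h 0 = (deriv ^^ n) (\<lambda>z. z * rq z) 0"
      by (rule higher_deriv_cong_ev[OF ev_ball refl]) (simp, erule hrq)
    also have "\<dots> = (\<Sum>i = 0..n. of_nat (n choose i) * (deriv ^^ i) (\<lambda>w. w) 0 * (deriv ^^ (n-i)) rq 0)"
      by (rule higher_deriv_mult[where S="ball 0 1"]) (use holrq in auto)
    finally show ?thesis .
  qed
  have Dh2: "(deriv ^^ 2) h 0 = 2 * (deriv ^^ 1) rq 0" using Dh[of 2] by (simp add: numeral_2_eq_2)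
  have Dh3: "(deriv ^^ 3) h 0 = 3 * (deriv ^^ 2) rq 0" using Dh[of 3] by (simp add: numeral_3_eq_3 numeral_2_eq_2)
  have Dzh1: "(deriv ^^ 1) (\<lambda>z. z * deriv (deriv h) z) 0 = (deriv ^^ 2) h 0"
    using Dzh[of 1] by (simp add: hdd_shift numeral_2_eq_2)
  have Dzh2: "(deriv ^^ 2) (\<lambda>z. z * deriv (deriv h) z) 0 = 2 * (deriv ^^ 3) h 0"
    using Dzh[of 2] by (simp add: hdd_shift numeral_2_eq_2 numeral_3_eq_3)
  have DQ: "(deriv ^^ n) q 0 = (1 / tau) * (deriv ^^ n) P 0" if "n \<ge> 1" for n
  proof -
    have "(deriv ^^ n) q 0 = (1 / tau) * (deriv ^^ n) (\<lambda>z. P z + K) 0"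
      unfolding q_def by (rule higher_deriv_cmult[where A="ball 0 1"]) (use holP in \<open>auto intro!: holomorphic_intros\<close>)
    also have "(deriv ^^ n) (\<lambda>z. P z + K) 0 = (deriv ^^ n) P 0 + (deriv ^^ n) (\<lambda>z. K) 0"
      by (rule higher_deriv_add[where S="ball 0 1"]) (use holP in auto)
    finally show ?thesis using that by simp
  qed
  have A: "complex_of_real (1 + lam + gam + 5 * lam * gam) = c1 + 2 * c2 + 2 * c3"
    by (simp add: c1_def c2_def c3_def algebra_simps)
  have B: "complex_of_real (1 + 2 * (lam + gam + 5 * lam * gam)) = c1 + 3 * c2 + 6 * c3"
    by (simp add: c1_def c2_def c3_def algebra_simps)
  have q1: "deriv q 0 = of_real (1 + lam + gam + 5 * lam * gam) / tau * tcoeff h 2"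
  proof -
    have "deriv q 0 = (deriv ^^ 1) q 0" by simp
    also have "\<dots> = (1 / tau) * (c1 * (deriv ^^ 1) rq 0 + c2 * (deriv ^^ 2) h 0 + c3 * (deriv ^^ 2) h 0)"
      using DQ[of 1] DP[of 1] Dzh1 by (simp add: numeral_2_eq_2)
    also have "\<dots> = of_real (1 + lam + gam + 5 * lam * gam) / tau * tcoeff h 2"
      unfolding A tcoeff_def using Dh2 by (simp add: field_simps)
    finally show ?thesis .
  qed
  have q2: "(deriv ^^ 2) q 0 = 2 * of_real (1 + 2 * (lam + gam + 5 * lam * gam)) / tau * tcoeff h 3"
  proof -
    have "(deriv ^^ 2) q 0 = (1 / tau) * (c1 * (deriv ^^ 2) rq 0 + c2 * (deriv ^^ 3) h 0 + c3 * (2 * (deriv ^^ 3) h 0))"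
      using DQ[of 2] DP[of 2] Dzh2 by (simp add: numeral_3_eq_3)
    also have "\<dots> = 2 * of_real (1 + 2 * (lam + gam + 5 * lam * gam)) / tau * tcoeff h 3"
      unfolding B tcoeff_def using Dh3 by (cases "tau = 0") (simp_all add: field_simps fact3c)
    finally show ?thesis .
  qed
  show ?thesis by (rule that[OF holq q0 J q1 q2])
qed

lemma id_deriv:
  fixes F :: "complex \<Rightarrow> complex"
  assumes "open S" "w \<in> S" "(F has_field_derivative D) (at w)" "\<And>x. x \<in> S \<Longrightarrow> F x = x"
  shows "D = 1"
proof -
  have "((\<lambda>x. x) has_field_derivative D) (at w)"
    by (rule has_field_derivative_transform_within_open[OF assms(3,1,2)]) (rule assms(4))
  from DERIV_unique[OF this DERIV_ident] show ?thesis .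
qed

lemma hderiv: "F holomorphic_on ball 0 1 \<Longrightarrow> x \<in> ball 0 1 \<Longrightarrow> (F has_field_derivative deriv F x) (at x)"
  by (rule holomorphic_derivI) auto

lemma inv_coeffs:
  assumes holf: "f holomorphic_on ball 0 1" and holg: "g holomorphic_on ball 0 1"
    and f0: "f 0 = 0" and f1: "deriv f 0 = 1" and inj: "inj_on f (ball 0 1)"
    and e: "e > 0" and fg: "\<forall>w\<in>ball 0 e. g w \<in> ball 0 1 \<and> f (g w) = w"
  shows "g 0 = 0" "deriv g 0 = 1" "tcoeff g 2 = - tcoeff f 2"
    "tcoeff g 3 = 2 * (tcoeff f 2)^2 - tcoeff f 3"
proof -
  define S where "S = ball (0::complex) (min e 1)"
  have S: "open S" "0 \<in> S" using e by (auto simp: S_def)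
  have Sb: "w \<in> ball 0 1" "g w \<in> ball 0 1" "f (g w) = w" if "w \<in> S" for w
    using that fg by (auto simp: S_def)
  have gb0: "g 0 \<in> ball 0 1" "f (g 0) = 0" using Sb[OF S(2)] by auto
  show g0: "g 0 = 0"
    by (rule inj_onD[OF inj]) (use gb0 f0 in auto)
  define f1 where "f1 = deriv f"
  define f2 where "f2 = deriv f1"
  define f3 where "f3 = deriv f2"
  define g1 where "g1 = deriv g"
  define g2 where "g2 = deriv g1"
  define g3 where "g3 = deriv g2"
  have hf1: "f1 holomorphic_on ball 0 1" unfolding f1_def using holf by (auto intro: holomorphic_deriv)
  have hf2: "f2 holomorphic_on ball 0 1" unfolding f2_def using hf1 by (auto intro: holomorphic_deriv)
  have hg1: "g1 holomorphic_on ball 0 1" unfolding g1_def using holg by (auto intro: holomorphic_deriv)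
  have hg2: "g2 holomorphic_on ball 0 1" unfolding g2_def using hg1 by (auto intro: holomorphic_deriv)
  have Df: "(f has_field_derivative f1 x) (at x)" if "x \<in> ball 0 1" for x
    unfolding f1_def by (rule hderiv[OF holf that])
  have Df1: "(f1 has_field_derivative f2 x) (at x)" if "x \<in> ball 0 1" for x
    unfolding f2_def by (rule hderiv[OF hf1 that])
  have Df2: "(f2 has_field_derivative f3 x) (at x)" if "x \<in> ball 0 1" for x
    unfolding f3_def by (rule hderiv[OF hf2 that])
  have Dg: "(g has_field_derivative g1 x) (at x)" if "x \<in> ball 0 1" for x
    unfolding g1_def by (rule hderiv[OF holg that])
  have Dg1: "(g1 has_field_derivative g2 x) (at x)" if "x \<in> ball 0 1" for x
    unfolding g2_def by (rule hderiv[OF hg1 that])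
  have Dg2: "(g2 has_field_derivative g3 x) (at x)" if "x \<in> ball 0 1" for x
    unfolding g3_def by (rule hderiv[OF hg2 that])
  have E1: "f1 (g w) * g1 w = 1" if "w \<in> S" for w
  proof -
    have "((\<lambda>w. f (g w)) has_field_derivative f1 (g w) * g1 w) (at w)"
      by (rule DERIV_chain2[OF Df[OF Sb(2)[OF that]] Dg[OF Sb(1)[OF that]]])
    from id_deriv[OF S(1) that this] show ?thesis using Sb by blast
  qed
  have E2: "f2 (g w) * g1 w * g1 w + g2 w * f1 (g w) = 0" if "w \<in> S" for w
  proof -
    have "((\<lambda>w. f1 (g w) * g1 w) has_field_derivative f2 (g w) * g1 w * g1 w + g2 w * f1 (g w)) (at w)"
      by (rule DERIV_mult[OF DERIV_chain2[OF Df1[OF Sb(2)[OF that]] Dg[OF Sb(1)[OF that]]] Dg1[OF Sb(1)[OF that]]])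
    from zero_deriv_const[OF S(1) that this] show ?thesis using E1 by blast
  qed
  have b0: "0 \<in> ball (0::complex) 1" by simp
  note D3 = DERIV_add[OF DERIV_mult[OF DERIV_mult[OF DERIV_chain2[OF Df2[OF gb0(1)] Dg[OF b0]] Dg1[OF b0]] Dg1[OF b0]]
             DERIV_mult[OF Dg2[OF b0] DERIV_chain2[OF Df1[OF gb0(1)] Dg[OF b0]]]]
  have E3: "(f3 (g 0) * g1 0 * g1 0 + g2 0 * f2 (g 0)) * g1 0 + g2 0 * (f2 (g 0) * g1 0) +
      (g3 0 * f1 (g 0) + f2 (g 0) * g1 0 * g2 0) = 0"
    by (rule zero_deriv_const[OF S(1) S(2) D3]) (rule E2)
  have f10: "f1 0 = 1" using f1 by (simp add: f1_def)
  have g10: "g1 0 = 1" using E1[OF S(2)] g0 f10 by simp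
  show "deriv g 0 = 1" using g10 by (simp add: g1_def)
  have g20: "g2 0 = - f2 0" using E2[OF S(2)] g0 f10 g10 by (simp add: algebra_simps add_eq_0_iff)
  have g30: "g3 0 = 3 * (f2 0)^2 - f3 0" using E3 g0 f10 g10 g20
    by (simp add: algebra_simps power2_eq_square)
  have t2: "tcoeff F 2 = deriv (deriv F) 0 / 2" for F by (simp add: tcoeff_def d2)
  have t3: "tcoeff F 3 = deriv (deriv (deriv F)) 0 / 6" for F by (simp add: tcoeff_def d3 fact3c)
  show "tcoeff g 2 = - tcoeff f 2" unfolding t2 using g20 by (simp add: f1_def f2_def g1_def g2_def)
  show "tcoeff g 3 = 2 * (tcoeff f 2)^2 - tcoeff f 3" unfolding t2 t3 using g30
    by (simp add: f1_def f2_def f3_def g1_def g2_def g3_def field_simps power2_eq_square)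
qed

lemma cara_scaled:
  assumes hol: "q holomorphic_on ball 0 1" and q0: "q 0 = 0" and M: "M > 0"
    and re: "\<forall>z\<in>ball 0 1. Re (q z) > - M"
  shows "cmod (deriv q 0) \<le> 2 * M" "cmod ((deriv ^^ 2) q 0) \<le> 4 * M"
proof -
  define u where "u = (\<lambda>z. complex_of_real (1 / M) * q z)"
  have holu: "u holomorphic_on ball 0 1" unfolding u_def using hol by (auto intro!: holomorphic_intros)
  have u0: "u 0 = 0" using q0 by (simp add: u_def)
  have reu: "\<forall>z\<in>ball 0 1. Re (u z) > -1"
  proof
    fix z :: complex assume "z \<in> ball 0 1"
    then have "Re (q z) > - M" using re by auto
    then have "Re (q z) / M > -1" using M by (simp add: field_simps)
    then show "Re (u z) > -1" by (simp add: u_def)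
  qed
  have du: "(deriv ^^ n) u 0 = complex_of_real (1 / M) * (deriv ^^ n) q 0" for n
    unfolding u_def by (rule higher_deriv_cmult[where A="ball 0 1"]) (use hol in auto)
  have n: "cmod ((deriv ^^ n) u 0) = cmod ((deriv ^^ n) q 0) / M" for n
    using M by (simp add: du norm_mult norm_divide)
  have "cmod ((deriv ^^ 1) u 0) \<le> 2" using cara1[OF holu u0 reu] by simp
  then have "cmod ((deriv ^^ 1) q 0) / M \<le> 2" unfolding n .
  then show "cmod (deriv q 0) \<le> 2 * M" using M by (simp add: pos_divide_le_eq)
  have "cmod ((deriv ^^ 2) u 0) \<le> 4" using cara2[OF holu u0 reu] by simp
  then have "cmod ((deriv ^^ 2) q 0) / M \<le> 4" unfolding n .
  then show "cmod ((deriv ^^ 2) q 0) \<le> 4 * M" using M by (simp add: pos_divide_le_eq)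
qed

theorem corollary7:
  fixes tau :: complex and lam gam beta :: real and f :: "complex \<Rightarrow> complex"
  assumes "lam \<ge> 0" "0 \<le> gam" "gam \<le> 1" "0 \<le> beta" "beta < 1" "tau \<noteq> 0"
    and "f \<in> Theta_Sigma tau lam gam 0 beta"
  shows "cmod (tcoeff f 2) \<le> min (2 * cmod tau * (1 - beta) / (1 + lam + gam + 5 * lam * gam))
            (sqrt (2 * cmod tau * (1 - beta) / (1 + 2 * (lam + gam + 5 * lam * gam))))
       \<and> cmod (tcoeff f 3) \<le> 2 * cmod tau * (1 - beta) / (1 + 2 * (lam + gam + 5 * lam * gam))"
proof -
  obtain g where bi: "bi_univalent_pair f g"
    and Jf: "\<forall>z\<in>ball 0 1. Re (Jfun tau lam gam 0 f z) > beta"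
    and Jg: "\<forall>w\<in>ball 0 1. Re (Jfun tau lam gam 0 g w) > beta"
    using assms(7) unfolding Theta_Sigma_def by blast
  have holf: "f holomorphic_on ball 0 1" and injf: "inj_on f (ball 0 1)" and f0: "f 0 = 0"
    and f1: "deriv f 0 = 1" and holg: "g holomorphic_on ball 0 1"
    using bi unfolding bi_univalent_pair_def by auto
  obtain e where e: "e > 0" and fg: "\<forall>w\<in>ball 0 e. g w \<in> ball 0 1 \<and> f (g w) = w"
    using bi unfolding bi_univalent_pair_def by blast
  note inv = inv_coeffs[OF holf holg f0 f1 injf e fg]
  define M where "M = 1 - beta"
  have M: "M > 0" using assms by (simp add: M_def)
  define A where "A = 1 + lam + gam + 5 * lam * gam"
  define B where "B = 1 + 2 * (lam + gam + 5 * lam * gam)"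
  have A: "A > 0" using assms by (simp add: A_def add_pos_nonneg)
  have B: "B > 0" using assms by (simp add: B_def add_pos_nonneg)
  have tz: "cmod tau > 0" using assms by simp
  obtain qf where hqf: "qf holomorphic_on ball 0 1" and qf0: "qf 0 = 0"
    and Jqf: "\<forall>z\<in>ball 0 1. Jfun tau lam gam 0 f z = 1 + qf z"
    and qf1: "deriv qf 0 = of_real A / tau * tcoeff f 2"
    and qf2: "(deriv ^^ 2) qf 0 = 2 * of_real B / tau * tcoeff f 3"
    using Jq[OF holf f0 f1, of tau lam gam] unfolding A_def B_def by blast
  obtain qg where hqg: "qg holomorphic_on ball 0 1" and qg0: "qg 0 = 0"
    and Jqg: "\<forall>z\<in>ball 0 1. Jfun tau lam gam 0 g z = 1 + qg z"
    and qg2: "(deriv ^^ 2) qg 0 = 2 * of_real B / tau * tcoeff g 3"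
    using Jq[OF holg inv(1,2), of tau lam gam] unfolding A_def B_def by blast
  have ref: "\<forall>z\<in>ball 0 1. Re (qf z) > - M"
  proof
    fix z :: complex assume z: "z \<in> ball 0 1"
    have "Re (Jfun tau lam gam 0 f z) > beta" using Jf z by blast
    then show "Re (qf z) > - M" using Jqf z by (simp add: M_def)
  qed
  have reg: "\<forall>z\<in>ball 0 1. Re (qg z) > - M"
  proof
    fix z :: complex assume z: "z \<in> ball 0 1"
    have "Re (Jfun tau lam gam 0 g z) > beta" using Jg z by blast
    then show "Re (qg z) > - M" using Jqg z by (simp add: M_def)
  qed
  note cf = cara_scaled[OF hqf qf0 M ref]
  note cg = cara_scaled[OF hqg qg0 M reg]
  have na2: "cmod (deriv qf 0) = A / cmod tau * cmod (tcoeff f 2)"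
    using A by (simp add: qf1 norm_mult norm_divide)
  have na3: "cmod ((deriv ^^ 2) qf 0) = 2 * B / cmod tau * cmod (tcoeff f 3)"
    using B by (simp add: qf2 norm_mult norm_divide)
  have nb3: "cmod ((deriv ^^ 2) qg 0) = 2 * B / cmod tau * cmod (tcoeff g 3)"
    using B by (simp add: qg2 norm_mult norm_divide)
  have a2: "cmod (tcoeff f 2) \<le> 2 * cmod tau * M / A"
    using cf(1) A tz unfolding na2 by (simp add: field_simps)
  have a3: "cmod (tcoeff f 3) \<le> 2 * cmod tau * M / B"
    using cf(2) B tz unfolding na3 by (simp add: field_simps)
  have b3: "cmod (tcoeff g 3) \<le> 2 * cmod tau * M / B"
    using cg(2) B tz unfolding nb3 by (simp add: field_simps)
  have "2 * (tcoeff f 2)^2 = tcoeff f 3 + tcoeff g 3" using inv(4) by simp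
  then have "2 * cmod (tcoeff f 2) ^ 2 = cmod (tcoeff f 3 + tcoeff g 3)"
    by (metis norm_mult norm_numeral norm_power)
  also have "\<dots> \<le> cmod (tcoeff f 3) + cmod (tcoeff g 3)" by (rule norm_triangle_ineq)
  finally have h2: "2 * cmod (tcoeff f 2) ^ 2 \<le> cmod (tcoeff f 3) + cmod (tcoeff g 3)" .
  define c where "c = 2 * cmod tau * M / B"
  have "cmod (tcoeff f 2) ^ 2 \<le> c" using h2 a3 b3 unfolding c_def[symmetric] by linarith
  then have "cmod (tcoeff f 2) ^ 2 \<le> 2 * cmod tau * M / B" unfolding c_def .
  then have s: "cmod (tcoeff f 2) \<le> sqrt (2 * cmod tau * M / B)" by (rule real_le_rsqrt)
  show ?thesis using a2 a3 s unfolding M_def A_def B_def by simp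
qed

end
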